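(* For any complex numbers $a,b,\alpha,\beta$ with $\beta a-\alpha b\neq0$ and any natural number $n\ge1$, \[ \sum_{r=0}^{\lfloor n/2\rfloor}\Psi\left(\begin{array}{cc|c} a & b & n \\ \alpha & \beta & r \end{array}\right)(-1)^r=\Psi(a+\alpha,b+\beta,n),\qquad \sum_{r=0}^{\lfloor (n-1)/2\rfloor}\Phi\left(\begin{array}{cc|c} a & b & n \\ \alpha & \beta & r \end{array}\right)(-1)^r=\Phi(a+\alpha,b+\beta,n). \]
   Context: $\delta(m)=1$ for $m$ odd, $0$ for $m$ even; $\lfloor\cdot\rfloor$ is the floor. $\Psi(a,b,n)$, $\Phi(a,b,n)$ are defined by $\Psi(a,b,0)=2$, $\Psi(a,b,1)=1$, $\Psi(a,b,n+1)=(2a-b)^{\delta(n)}\Psi(a,b,n)-a\Psi(a,b,n-1)$ and $\Phi(a,b,0)=0$, $\Phi(a,b,1)=1$, $\Phi(a,b,n+1)=(2a-b)^{\delta(n+1)}\Phi(a,b,n)-a\Phi(a,b,n-1)$. For $n\ge1$ and numbers with $\beta a-\alpha b\ne0$, $\Psi\left(\begin{array}{cc|c} a & b & n \\ \alpha & \beta & r \end{array}\right)$ ($0\le r\le\lfloor n/2\rfloor$) and $\Phi\left(\begin{array}{cc|c} a & b & n \\ \alpha & \beta & r \end{array}\right)$ ($0\le r\le\lfloor (n-1)/2\rfloor$) are the unique numbers such that, identically in $x,y$, $(\beta a-\alpha b)^{\lfloor n/2\rfloor}\frac{x^n+y^n}{(x+y)^{\delta(n)}}=\sum_{r}\Psi\left(\begin{array}{cc|c}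 a & b & n \\ \alpha & \beta & r \end{array}\right)(\alpha x^2+\beta xy+\alpha y^2)^{\lfloor n/2\rfloor-r}(ax^2+bxy+ay^2)^r$ and $(\beta a-\alpha b)^{\lfloor (n-1)/2\rfloor}\frac{x^n-y^n}{(x-y)(x+y)^{\delta(n-1)}}=\sum_{r}\Phi\left(\begin{array}{cc|c} a & b & n \\ \alpha & \beta & r \end{array}\right)(\alpha x^2+\beta xy+\alpha y^2)^{\lfloor (n-1)/2\rfloor-r}(ax^2+bxy+ay^2)^r$. *)

theory Defs
  imports Complex_Main
begin

definition delta :: "nat \<Rightarrow> nat" where
  "delta m = (if odd m then 1 else 0)"

fun Psi :: "complex \<Rightarrow> complex \<Rightarrow> nat \<Rightarrow> complex" where
  "Psi a b 0 = 2"
| "Psi a b (Suc 0) = 1"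
| "Psi a b (Suc (Suc m)) =
     (2*a - b) ^ delta (Suc m) * Psi a b (Suc m) - a * Psi a b m"

fun Phi :: "complex \<Rightarrow> complex \<Rightarrow> nat \<Rightarrow> complex" where
  "Phi a b 0 = 0"
| "Phi a b (Suc 0) = 1"
| "Phi a b (Suc (Suc m)) =
     (2*a - b) ^ delta (Suc (Suc m)) * Phi a b (Suc m) - a * Phi a b m"

text \<open>The rational left-hand side is a
  polynomial; the identity is required wherever the denominator is nonzero.\<close>
definition PsiC :: "complex \<Rightarrow> complex \<Rightarrow> complex \<Rightarrow> complex \<Rightarrow> nat \<Rightarrow> nat \<Rightarrow> complex" where
  "PsiC a b al be n = (THE c. (\<forall>r. n div 2 < r \<longrightarrow> c r = 0) \<and>
     (\<forall>x y::complex. (x + y) ^ delta n \<noteq> 0 \<longrightarrow>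
        (be*a - al*b) ^ (n div 2) * ((x^n + y^n) / (x + y) ^ delta n) =
        (\<Sum>r\<le>n div 2. c r * (al*x^2 + be*x*y + al*y^2) ^ (n div 2 - r)
                          * (a*x^2 + b*x*y + a*y^2) ^ r)))"

definition PhiC :: "complex \<Rightarrow> complex \<Rightarrow> complex \<Rightarrow> complex \<Rightarrow> nat \<Rightarrow> nat \<Rightarrow> complex" where
  "PhiC a b al be n = (THE c. (\<forall>r. (n - 1) div 2 < r \<longrightarrow> c r = 0) \<and>
     (\<forall>x y::complex. (x - y) * (x + y) ^ delta (n - 1) \<noteq> 0 \<longrightarrow>
        (be*a - al*b) ^ ((n - 1) div 2) * ((x^n - y^n) / ((x - y) * (x + y) ^ delta (n - 1))) =
        (\<Sum>r\<le>(n - 1) div 2. c r * (al*x^2 + be*x*y + al*y^2) ^ ((n - 1) div 2 - r)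
                          * (a*x^2 + b*x*y + a*y^2) ^ r)))"

end

theory Submission
  imports Defs "HOL-Computational_Algebra.Polynomial"
begin

definition ev :: "nat \<Rightarrow> complex poly \<Rightarrow> complex \<Rightarrow> complex \<Rightarrow> complex" where
  "ev k q U V = (\<Sum>r\<le>k. coeff q r * U^(k-r) * V^r)"

lemma ev_diff: "ev k (p - q) U V = ev k p U V - ev k q U V"
  by (simp add: ev_def algebra_simps sum_subtractf)

lemma ev_add: "ev k (p + q) U V = ev k p U V + ev k q U V"
  by (simp add: ev_def algebra_simps sum.distrib)

lemma ev_mult_lin:
  assumes "degree q \<le> k"
  shows "ev (Suc k) (q * [:l,m:]) U V = (l*U + m*V) * ev k q U V"
proof -
  have c: "coeff q (Suc k) = 0" using assms by (simp add: coeff_eq_0)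
  have e: "q * [:l,m:] = smult l q + pCons 0 (smult m q)" by simp
  have 1: "ev (Suc k) (smult l q) U V = l*U*ev k q U V"
  proof -
    have "ev (Suc k) (smult l q) U V = (\<Sum>r\<le>k. l * coeff q r * U^(Suc k-r) * V^r)"
      unfolding ev_def by (simp add: c)
    also have "\<dots> = (\<Sum>r\<le>k. l * U * (coeff q r * U^(k-r) * V^r))"
      by (rule sum.cong) (auto simp: Suc_diff_le)
    finally show ?thesis by (simp add: ev_def sum_distrib_left)
  qed
  have 2: "ev (Suc k) (pCons 0 (smult m q)) U V = m*V*ev k q U V"
    unfolding ev_def by (subst sum.atMost_Suc_shift) (simp add: sum_distrib_left mult_ac)
  show ?thesis by (simp only: e ev_add 1 2) (simp add: algebra_simps)
qed

fun qPsi :: "complex \<Rightarrow> complex \<Rightarrow> complex \<Rightarrow> complex \<Rightarrow> nat \<Rightarrow> complex poly" where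
  "qPsi a b al be 0 = [:2:]"
| "qPsi a b al be (Suc 0) = [:1:]"
| "qPsi a b al be (Suc (Suc m)) =
     qPsi a b al be (Suc m) * [:2*a-b, be-2*al:] ^ delta (Suc m) - qPsi a b al be m * [:a, -al:]"

fun qPhi :: "complex \<Rightarrow> complex \<Rightarrow> complex \<Rightarrow> complex \<Rightarrow> nat \<Rightarrow> complex poly" where
  "qPhi a b al be 0 = 0"
| "qPhi a b al be (Suc 0) = [:1:]"
| "qPhi a b al be (Suc (Suc m)) =
     qPhi a b al be (Suc m) * [:2*a-b, be-2*al:] ^ delta (Suc (Suc m)) - qPhi a b al be m * [:a, -al:]"

lemma deg_lin: "degree [:u,v:] \<le> 1"
  by simp

lemma deg_mult_lin: "degree q \<le> k \<Longrightarrow> degree (q * [:u,v:]) \<le> Suc k"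
  using degree_mult_le[of q "[:u,v:]"] deg_lin[of u v] by linarith

lemma deg_qPsi: "degree (qPsi a b al be n) \<le> n div 2"
proof (induction a b al be n rule: qPsi.induct)
  case (3 a b al be m)
  show ?case
  proof (cases "odd (Suc m)")
    case True
    then have "even m" by simp
    then obtain j where m: "m = 2*j" by (rule evenE)
    have e: "qPsi a b al be (Suc (Suc m)) = qPsi a b al be (Suc m) * [:2*a-b, be-2*al:] - qPsi a b al be m * [:a, -al:]"
      using True by (simp del: mult_pCons_right add: delta_def)
    have d1: "degree (qPsi a b al be (Suc m)) \<le> j" using 3(1) m by (simp del: qPsi.simps)
    have d2: "degree (qPsi a b al be m) \<le> j" using 3(2) m by (simp del: qPsi.simps)
    have "Suc (Suc m) div 2 = Suc j" using m by simp
    then show ?thesis unfolding e using deg_mult_lin[OF d1] deg_mult_lin[OF d2]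
      by (simp del: qPsi.simps mult_pCons_right add: degree_diff_le)
  next
    case False
    then have "odd m" by simp
    then obtain j where m: "m = 2*j+1" by (rule oddE)
    have e: "qPsi a b al be (Suc (Suc m)) = qPsi a b al be (Suc m) - qPsi a b al be m * [:a, -al:]"
      using False by (simp del: mult_pCons_right add: delta_def)
    have d1: "degree (qPsi a b al be (Suc m)) \<le> Suc j" using 3(1) m by (simp del: qPsi.simps)
    have d2: "degree (qPsi a b al be m) \<le> j" using 3(2) m by (simp del: qPsi.simps)
    have "Suc (Suc m) div 2 = Suc j" using m by simp
    then show ?thesis unfolding e using d1 deg_mult_lin[OF d2]
      by (simp del: qPsi.simps mult_pCons_right add: degree_diff_le)
  qed
qed auto

lemma deg_qPhi: "degree (qPhi a b al be n) \<le> (n - 1) div 2"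
proof (induction a b al be n rule: qPhi.induct)
  case (3 a b al be m)
  show ?case
  proof (cases "odd m")
    case True
    then obtain j where m: "m = 2*j+1" by (metis oddE)
    have e: "qPhi a b al be (Suc (Suc m)) = qPhi a b al be (Suc m) * [:2*a-b, be-2*al:] - qPhi a b al be m * [:a, -al:]"
      using True by (simp del: mult_pCons_right add: delta_def)
    have d1: "degree (qPhi a b al be (Suc m)) \<le> j" using 3(1) m by (simp del: qPhi.simps)
    have d2: "degree (qPhi a b al be m) \<le> j" using 3(2) m by (simp del: qPhi.simps)
    have "(Suc (Suc m) - 1) div 2 = Suc j" using m by simp
    then show ?thesis unfolding e using deg_mult_lin[OF d1] deg_mult_lin[OF d2]
      by (simp del: qPhi.simps mult_pCons_right add: degree_diff_le)
  next
    case False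
    then obtain j where m: "m = 2*j" by (metis evenE)
    have e: "qPhi a b al be (Suc (Suc m)) = qPhi a b al be (Suc m) - qPhi a b al be m * [:a, -al:]"
      using False by (simp del: mult_pCons_right add: delta_def)
    show ?thesis
    proof (cases j)
      case 0 then show ?thesis using m by (simp add: delta_def)
    next
      case (Suc i)
      have d1: "degree (qPhi a b al be (Suc m)) \<le> Suc i" using 3(1) m Suc by (simp del: qPhi.simps)
      have d2: "degree (qPhi a b al be m) \<le> i" using 3(2) m Suc by (simp del: qPhi.simps)
      have "(Suc (Suc m) - 1) div 2 = Suc i" using m Suc by simp
      then show ?thesis unfolding e using d1 deg_mult_lin[OF d2]
        by (simp del: qPhi.simps mult_pCons_right add: degree_diff_le)
    qed
  qed
qed auto

lemma lin1: fixes a b al be x y :: complex shows "(2*a-b) * (al*x^2 + be*x*y + al*y^2) + (be-2*al) * (a*x^2 + b*x*y + a*y^2)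
   = (be*a - al*b) * (x+y)^2"
  by (simp add: power2_eq_square algebra_simps)

lemma lin2: fixes a b al be x y :: complex shows "a * (al*x^2 + be*x*y + al*y^2) + (-al) * (a*x^2 + b*x*y + a*y^2)
   = (be*a - al*b) * (x*y)"
  by (simp add: power2_eq_square algebra_simps)

lemma Psi_main:
  "(be*a - al*b)^(n div 2) * (x^n + y^n) =
   (x+y)^delta n * ev (n div 2) (qPsi a b al be n) (al*x^2 + be*x*y + al*y^2) (a*x^2 + b*x*y + a*y^2)"
proof (induction a b al be n rule: qPsi.induct)
  case (1 a b al be) then show ?case by (simp add: ev_def delta_def)
next
  case (2 a b al be) then show ?case by (simp add: ev_def delta_def)
next
  case (3 a b al be m)
  define U where "U = al*x^2 + be*x*y + al*y^2"
  define V where "V = a*x^2 + b*x*y + a*y^2"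
  define D where "D = be*a - al*b"
  define s where "s = x + y"
  define E1 where "E1 = ev (Suc m div 2) (qPsi a b al be (Suc m)) U V"
  define E0 where "E0 = ev (m div 2) (qPsi a b al be m) U V"
  have rec: "x^Suc (Suc m) + y^Suc (Suc m) = s*(x^Suc m + y^Suc m) - x*y*(x^m+y^m)"
    by (simp add: s_def algebra_simps)
  have l1: "(2*a-b)*U + (be-2*al)*V = D*s^2" using lin1 unfolding U_def V_def D_def s_def by simp
  have l2: "a*U + (-al)*V = D*(x*y)" using lin2 unfolding U_def V_def D_def by simp
  have IH1: "D^(Suc m div 2) * (x^Suc m + y^Suc m) = s^delta (Suc m) * E1"
    using 3(1) unfolding U_def V_def D_def s_def E1_def by simp
  have IH0: "D^(m div 2) * (x^m + y^m) = s^delta m * E0"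
    using 3(2) unfolding U_def V_def D_def s_def E0_def by simp
  show ?case
  proof (cases "odd (Suc m)")
    case True
    then have "even m" by simp
    then obtain j where m: "m = 2*j" by (rule evenE)
    have e: "qPsi a b al be (Suc (Suc m)) = qPsi a b al be (Suc m) * [:2*a-b, be-2*al:] - qPsi a b al be m * [:a, -al:]"
      using True by (simp del: mult_pCons_right add: delta_def)
    have d1: "degree (qPsi a b al be (Suc m)) \<le> j" using deg_qPsi[of a b al be "Suc m"] m by simp
    have d2: "degree (qPsi a b al be m) \<le> j" using deg_qPsi[of a b al be m] m by simp
    have k: "Suc (Suc m) div 2 = Suc j" "Suc m div 2 = j" "m div 2 = j" using m by simp_all
    have dl: "delta (Suc (Suc m)) = 0" "delta (Suc m) = 1" "delta m = 0" using m by (simp_all add: delta_def)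
    have "ev (Suc (Suc m) div 2) (qPsi a b al be (Suc (Suc m))) U V = D*s^2*E1 - D*(x*y)*E0"
      unfolding e k ev_diff ev_mult_lin[OF d1] ev_mult_lin[OF d2] l1 l2
      using k E1_def E0_def by simp
    also have "\<dots> = D * (s * (D^j * (x^Suc m + y^Suc m)) - x*y*(D^j*(x^m+y^m)))"
    proof -
      have i1: "D^j * (x^Suc m + y^Suc m) = s * E1" using IH1 k dl by simp
      have i0: "D^j * (x^m + y^m) = E0" using IH0 k dl by simp
      show ?thesis unfolding i1 i0 by (simp add: power2_eq_square algebra_simps)
    qed
    also have "\<dots> = D^(Suc (Suc m) div 2) * (x^Suc (Suc m) + y^Suc (Suc m))"
      unfolding rec k by (simp add: algebra_simps)
    finally show ?thesis using dl unfolding U_def V_def D_def by simp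
  next
    case False
    then have "odd m" by simp
    then obtain j where m: "m = 2*j+1" by (rule oddE)
    have e: "qPsi a b al be (Suc (Suc m)) = qPsi a b al be (Suc m) - qPsi a b al be m * [:a, -al:]"
      using False by (simp del: mult_pCons_right add: delta_def)
    have d2: "degree (qPsi a b al be m) \<le> j" using deg_qPsi[of a b al be m] m by simp
    have k: "Suc (Suc m) div 2 = Suc j" "Suc m div 2 = Suc j" "m div 2 = j" using m by simp_all
    have dl: "delta (Suc (Suc m)) = 1" "delta (Suc m) = 0" "delta m = 1" using m by (simp_all add: delta_def)
    have "s * ev (Suc (Suc m) div 2) (qPsi a b al be (Suc (Suc m))) U V = s * (E1 - D*(x*y)*E0)"
      unfolding e k ev_diff ev_mult_lin[OF d2] l1 l2
      using k E1_def E0_def by simp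
    also have "\<dots> = s * (D^Suc j * (x^Suc m + y^Suc m)) - x*y*(D * (D^j*(x^m+y^m)))"
    proof -
      have i1: "D^Suc j * (x^Suc m + y^Suc m) = E1" using IH1 k dl by simp
      have i0: "D^j * (x^m + y^m) = s * E0" using IH0 k dl by simp
      show ?thesis unfolding i1 i0 by (simp add: algebra_simps)
    qed
    also have "\<dots> = D^(Suc (Suc m) div 2) * (x^Suc (Suc m) + y^Suc (Suc m))"
      unfolding rec k by (simp add: algebra_simps)
    finally show ?thesis using dl unfolding U_def V_def D_def s_def by simp
  qed
qed

lemma Phi_main:
  "(be*a - al*b)^((n - 1) div 2) * (x^n - y^n) =
   (x - y) * (x+y)^delta (n - 1) * ev ((n - 1) div 2) (qPhi a b al be n) (al*x^2 + be*x*y + al*y^2) (a*x^2 + b*x*y + a*y^2)"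
proof (induction a b al be n rule: qPhi.induct)
  case (1 a b al be) then show ?case by (simp add: ev_def delta_def)
next
  case (2 a b al be) then show ?case by (simp add: ev_def delta_def)
next
  case (3 a b al be m)
  define U where "U = al*x^2 + be*x*y + al*y^2"
  define V where "V = a*x^2 + b*x*y + a*y^2"
  define D where "D = be*a - al*b"
  define s where "s = x + y"
  define E1 where "E1 = ev ((Suc m - 1) div 2) (qPhi a b al be (Suc m)) U V"
  define E0 where "E0 = ev ((m - 1) div 2) (qPhi a b al be m) U V"
  have rec: "x^Suc (Suc m) - y^Suc (Suc m) = s*(x^Suc m - y^Suc m) - x*y*(x^m-y^m)"
    by (simp add: s_def algebra_simps)
  have l1: "(2*a-b)*U + (be-2*al)*V = D*s^2" using lin1 unfolding U_def V_def D_def s_def by simp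
  have l2: "a*U + (-al)*V = D*(x*y)" using lin2 unfolding U_def V_def D_def by simp
  have IH1: "D^((Suc m - 1) div 2) * (x^Suc m - y^Suc m) = (x-y) * s^delta (Suc m - 1) * E1"
    using 3(1) unfolding U_def V_def D_def s_def E1_def by simp
  have IH0: "D^((m - 1) div 2) * (x^m - y^m) = (x-y) * s^delta (m - 1) * E0"
    using 3(2) unfolding U_def V_def D_def s_def E0_def by simp
  show ?case
  proof (cases "odd m")
    case True
    then obtain j where m: "m = 2*j+1" by (rule oddE)
    have e: "qPhi a b al be (Suc (Suc m)) = qPhi a b al be (Suc m) * [:2*a-b, be-2*al:] - qPhi a b al be m * [:a, -al:]"
      using True by (simp del: mult_pCons_right add: delta_def)
    have d1: "degree (qPhi a b al be (Suc m)) \<le> j" using deg_qPhi[of a b al be "Suc m"] m by simp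
    have d2: "degree (qPhi a b al be m) \<le> j" using deg_qPhi[of a b al be m] m by simp
    have k: "(Suc (Suc m) - 1) div 2 = Suc j" "(Suc m - 1) div 2 = j" "(m - 1) div 2 = j" using m by simp_all
    have dl: "delta (Suc (Suc m) - 1) = 0" "delta (Suc m - 1) = 1" "delta (m - 1) = 0" using m by (simp_all add: delta_def)
    have "(x - y) * ev ((Suc (Suc m) - 1) div 2) (qPhi a b al be (Suc (Suc m))) U V = (x - y) * (D*s^2*E1 - D*(x*y)*E0)"
      unfolding e k ev_diff ev_mult_lin[OF d1] ev_mult_lin[OF d2] l1 l2
      using k E1_def E0_def by simp
    also have "\<dots> = D * (s * (D^j * (x^Suc m - y^Suc m)) - x*y*(D^j*(x^m-y^m)))"
    proof -
      have i1: "D^j * (x^Suc m - y^Suc m) = (x-y) * s * E1" using IH1 k dl by simp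
      have i0: "D^j * (x^m - y^m) = (x-y) * E0" using IH0 k dl by simp
      show ?thesis unfolding i1 i0 by (simp add: power2_eq_square algebra_simps)
    qed
    also have "\<dots> = D^((Suc (Suc m) - 1) div 2) * (x^Suc (Suc m) - y^Suc (Suc m))"
      unfolding rec k by (simp add: algebra_simps)
    finally show ?thesis using dl unfolding U_def V_def D_def by simp
  next
    case False
    then have "even m" by simp
    then obtain j where m: "m = 2*j" by (rule evenE)
    show ?thesis
    proof (cases j)
      case 0 then show ?thesis using m by (simp add: ev_def delta_def power2_eq_square algebra_simps)
    next
      case (Suc i)
      have e: "qPhi a b al be (Suc (Suc m)) = qPhi a b al be (Suc m) - qPhi a b al be m * [:a, -al:]"
        using False by (simp del: mult_pCons_right add: delta_def)
      have d2: "degree (qPhi a b al be m) \<le> i" using deg_qPhi[of a b al be m] m Suc by simp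
      have k: "(Suc (Suc m) - 1) div 2 = Suc i" "(Suc m - 1) div 2 = Suc i" "(m - 1) div 2 = i" using m Suc by simp_all
      have dl: "delta (Suc (Suc m) - 1) = 1" "delta (Suc m - 1) = 0" "delta (m - 1) = 1" using m Suc by (simp_all add: delta_def)
      have "(x - y) * s * ev ((Suc (Suc m) - 1) div 2) (qPhi a b al be (Suc (Suc m))) U V = (x - y) * s * (E1 - D*(x*y)*E0)"
        unfolding e k ev_diff ev_mult_lin[OF d2] l1 l2
        using k E1_def E0_def by simp
      also have "\<dots> = s * (D^Suc i * (x^Suc m - y^Suc m)) - x*y*(D * (D^i*(x^m-y^m)))"
      proof -
        have i1: "D^Suc i * (x^Suc m - y^Suc m) = (x-y) * E1" using IH1 k dl by simp
        have i0: "D^i * (x^m - y^m) = (x-y) * s * E0" using IH0 k dl by simp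
        show ?thesis unfolding i1 i0 by (simp add: algebra_simps)
      qed
      also have "\<dots> = D^((Suc (Suc m) - 1) div 2) * (x^Suc (Suc m) - y^Suc (Suc m))"
        unfolding rec k by (simp add: algebra_simps)
      finally show ?thesis using dl unfolding U_def V_def D_def s_def by simp
    qed
  qed
qed

lemma divlem: "(X::complex)/D - 4*(Y/D) = (X - 4*Y)/D"
  by (simp add: diff_divide_distrib)

lemma divlem2: "(c1::complex)*(X/D) + c2*(Y/D) = (c1*X + c2*Y)/D"
  by (simp add: add_divide_distrib)

lemma uniq:
  fixes a b al be :: complex and e :: "nat \<Rightarrow> complex"
  assumes D: "be*a - al*b \<noteq> 0"
  and H: "\<And>x y. x + y \<noteq> 0 \<Longrightarrow> x - y \<noteq> 0 \<Longrightarrow>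
     (\<Sum>r\<le>k. e r * (al*x^2+be*x*y+al*y^2)^(k-r) * (a*x^2+b*x*y+a*y^2)^r) = 0"
  and r: "r \<le> k"
  shows "e r = 0"
proof -
  define E where "E = (\<Sum>r\<le>k. monom (e r) r)"
  define Q where "Q = [:2*a-b, be-2*al:] * [:-2*a-b, be+2*al:]"
  have pt: "poly (Q*E) t = 0" for t
  proof (cases "(2*a-b) + (be-2*al)*t = 0 \<or> (-2*a-b)+(be+2*al)*t = 0")
    case True
    have "poly Q t = ((2*a-b) + (be-2*al)*t) * ((-2*a-b)+(be+2*al)*t)" by (simp add: Q_def algebra_simps)
    then have "poly Q t = 0" using True by auto
    then show ?thesis by simp
  next
    case False
    define S where "S = ((2*a-b) + (be-2*al)*t)/(be*a - al*b)"
    define P where "P = (a - al*t)/(be*a - al*b)"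
    define s where "s = csqrt S"
    define w where "w = csqrt (S - 4*P)"
    define x where "x = (s+w)/2"
    define y where "y = (s-w)/2"
    have s2: "s^2 = S" by (simp add: s_def)
    have w2: "w^2 = S - 4*P" by (simp add: w_def)
    have SP: "S - 4*P = ((-2*a-b)+(be+2*al)*t)/(be*a - al*b)"
    proof -
      have "S - 4*P = (((2*a-b) + (be-2*al)*t) - 4*(a - al*t))/(be*a-al*b)"
        unfolding S_def P_def by (rule divlem)
      also have "((2*a-b) + (be-2*al)*t) - 4*(a - al*t) = (-2*a-b)+(be+2*al)*t"
        by (simp add: algebra_simps)
      finally show ?thesis .
    qed
    have Snz: "S \<noteq> 0" using False D by (simp add: S_def)
    have SPnz: "S - 4*P \<noteq> 0" using False D SP by simp
    have xy1: "x + y = s" "x - y = w" by (simp_all add: x_def y_def field_simps)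
    have snz: "s \<noteq> 0" using s2 Snz by auto
    have wnz: "w \<noteq> 0" using w2 SPnz by auto
    have "al*x^2+be*x*y+al*y^2 = al*(s^2+w^2)/2 + be*(s^2-w^2)/4"
      by (simp add: x_def y_def field_simps power2_eq_square)
    also have "\<dots> = al*S + (be-2*al)*P" unfolding s2 w2 by (simp add: field_simps)
    also have "\<dots> = (al*((2*a-b) + (be-2*al)*t) + (be-2*al)*(a - al*t))/(be*a-al*b)"
      unfolding S_def P_def by (rule divlem2)
    also have "al*((2*a-b) + (be-2*al)*t) + (be-2*al)*(a - al*t) = be*a-al*b"
      by (simp add: algebra_simps)
    also have "(be*a-al*b)/(be*a-al*b) = 1" using D by simp
    finally have U: "al*x^2+be*x*y+al*y^2 = 1" .
    have "a*x^2+b*x*y+a*y^2 = a*(s^2+w^2)/2 + b*(s^2-w^2)/4"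
      by (simp add: x_def y_def field_simps power2_eq_square)
    also have "\<dots> = a*S + (b-2*a)*P" unfolding s2 w2 by (simp add: field_simps)
    also have "\<dots> = (a*((2*a-b) + (be-2*al)*t) + (b-2*a)*(a - al*t))/(be*a-al*b)"
      unfolding S_def P_def by (rule divlem2)
    also have "a*((2*a-b) + (be-2*al)*t) + (b-2*a)*(a - al*t) = t*(be*a-al*b)"
      by (simp add: algebra_simps)
    also have "t*(be*a-al*b)/(be*a-al*b) = t" using D by simp
    finally have V: "a*x^2+b*x*y+a*y^2 = t" .
    have "(\<Sum>r\<le>k. e r * t^r) = 0" using H[of x y] U V xy1 snz wnz by simp
    then show ?thesis by (simp add: E_def poly_sum poly_monom)
  qed
  have QE: "Q*E = 0" using pt poly_all_0_iff_0 by blast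
  have q1: "[:2*a-b, be-2*al:] \<noteq> 0"
  proof
    assume "[:2*a-b, be-2*al:] = 0"
    then have "b = 2*a" "be = 2*al" by simp_all
    then show False using D by (simp add: algebra_simps)
  qed
  have q2: "[:-2*a-b, be+2*al:] \<noteq> 0"
  proof
    assume "[:-2*a-b, be+2*al:] = 0"
    then have "b = -2*a" "be = -2*al" by (simp_all add: algebra_simps eq_neg_iff_add_eq_0)
    then show False using D by (simp add: algebra_simps)
  qed
  have "Q \<noteq> 0" unfolding Q_def using q1 q2 by (rule no_zero_divisors)
  then have "E = 0" using QE by simp
  then have "coeff E r = 0" by simp
  then show ?thesis using r by (simp add: E_def coeff_sum coeff_monom)
qed

lemma Psi_ident:
  assumes nz: "(x + y) ^ delta n \<noteq> 0"
  shows "(be*a - al*b) ^ (n div 2) * ((x^n + y^n) / (x + y) ^ delta n) =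
    (\<Sum>r\<le>n div 2. coeff (qPsi a b al be n) r * (al*x^2 + be*x*y + al*y^2) ^ (n div 2 - r)
                          * (a*x^2 + b*x*y + a*y^2) ^ r)"
proof -
  have "(be*a - al*b) ^ (n div 2) * ((x^n + y^n) / (x + y) ^ delta n)
      = ((be*a - al*b) ^ (n div 2) * (x^n + y^n)) / (x + y) ^ delta n" by simp
  also have "\<dots> = ev (n div 2) (qPsi a b al be n) (al*x^2 + be*x*y + al*y^2) (a*x^2 + b*x*y + a*y^2)"
    unfolding Psi_main using nz by simp
  finally show ?thesis by (simp add: ev_def)
qed

lemma Phi_ident:
  assumes nz: "(x - y) * (x + y) ^ delta (n - 1) \<noteq> 0"
  shows "(be*a - al*b) ^ ((n - 1) div 2) * ((x^n - y^n) / ((x - y) * (x + y) ^ delta (n - 1))) =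
    (\<Sum>r\<le>(n - 1) div 2. coeff (qPhi a b al be n) r * (al*x^2 + be*x*y + al*y^2) ^ ((n - 1) div 2 - r)
                          * (a*x^2 + b*x*y + a*y^2) ^ r)"
proof -
  have "(be*a - al*b) ^ ((n - 1) div 2) * ((x^n - y^n) / ((x - y) * (x + y) ^ delta (n - 1)))
      = ((be*a - al*b) ^ ((n - 1) div 2) * (x^n - y^n)) / ((x - y) * (x + y) ^ delta (n - 1))" by simp
  also have "\<dots> = ev ((n - 1) div 2) (qPhi a b al be n) (al*x^2 + be*x*y + al*y^2) (a*x^2 + b*x*y + a*y^2)"
    unfolding Phi_main using nz by simp
  finally show ?thesis by (simp add: ev_def)
qed

lemma PsiC_eq:
  assumes D: "be*a - al*b \<noteq> 0"
  shows "PsiC a b al be n = coeff (qPsi a b al be n)"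
  unfolding PsiC_def
proof (rule the_equality)
  show "(\<forall>r. n div 2 < r \<longrightarrow> coeff (qPsi a b al be n) r = 0) \<and>
     (\<forall>x y::complex. (x + y) ^ delta n \<noteq> 0 \<longrightarrow>
        (be*a - al*b) ^ (n div 2) * ((x^n + y^n) / (x + y) ^ delta n) =
        (\<Sum>r\<le>n div 2. coeff (qPsi a b al be n) r * (al*x^2 + be*x*y + al*y^2) ^ (n div 2 - r)
                          * (a*x^2 + b*x*y + a*y^2) ^ r))"
    using deg_qPsi[of a b al be n] Psi_ident by (auto simp: coeff_eq_0)
next
  fix c
  assume H: "(\<forall>r. n div 2 < r \<longrightarrow> c r = 0) \<and>
     (\<forall>x y::complex. (x + y) ^ delta n \<noteq> 0 \<longrightarrow>
        (be*a - al*b) ^ (n div 2) * ((x^n + y^n) / (x + y) ^ delta n) =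
        (\<Sum>r\<le>n div 2. c r * (al*x^2 + be*x*y + al*y^2) ^ (n div 2 - r)
                          * (a*x^2 + b*x*y + a*y^2) ^ r))"
  show "c = coeff (qPsi a b al be n)"
  proof
    fix r
    show "c r = coeff (qPsi a b al be n) r"
    proof (cases "r \<le> n div 2")
      case False
      then show ?thesis using H deg_qPsi[of a b al be n] by (auto simp: coeff_eq_0)
    next
      case True
      have "c r - coeff (qPsi a b al be n) r = 0"
      proof (rule uniq[OF D _ True])
        fix x y :: complex
        assume "x + y \<noteq> 0" "x - y \<noteq> 0"
        then have nz: "(x + y) ^ delta n \<noteq> 0" by simp
        show "(\<Sum>r\<le>n div 2. (c r - coeff (qPsi a b al be n) r) * (al*x^2+be*x*y+al*y^2)^(n div 2-r) * (a*x^2+b*x*y+a*y^2)^r) = 0"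
          using conjunct2[OF H, rule_format, OF nz] Psi_ident[OF nz, of be a al b]
          by (simp add: left_diff_distrib sum_subtractf)
      qed
      then show ?thesis by simp
    qed
  qed
qed

lemma PhiC_eq:
  assumes D: "be*a - al*b \<noteq> 0"
  shows "PhiC a b al be n = coeff (qPhi a b al be n)"
  unfolding PhiC_def
proof (rule the_equality)
  show "(\<forall>r. (n - 1) div 2 < r \<longrightarrow> coeff (qPhi a b al be n) r = 0) \<and>
     (\<forall>x y::complex. (x - y) * (x + y) ^ delta (n - 1) \<noteq> 0 \<longrightarrow>
        (be*a - al*b) ^ ((n - 1) div 2) * ((x^n - y^n) / ((x - y) * (x + y) ^ delta (n - 1))) =
        (\<Sum>r\<le>(n - 1) div 2. coeff (qPhi a b al be n) r * (al*x^2 + be*x*y + al*y^2) ^ ((n - 1) div 2 - r)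
                          * (a*x^2 + b*x*y + a*y^2) ^ r))"
    using deg_qPhi[of a b al be n] Phi_ident by (auto simp: coeff_eq_0)
next
  fix c
  assume H: "(\<forall>r. (n - 1) div 2 < r \<longrightarrow> c r = 0) \<and>
     (\<forall>x y::complex. (x - y) * (x + y) ^ delta (n - 1) \<noteq> 0 \<longrightarrow>
        (be*a - al*b) ^ ((n - 1) div 2) * ((x^n - y^n) / ((x - y) * (x + y) ^ delta (n - 1))) =
        (\<Sum>r\<le>(n - 1) div 2. c r * (al*x^2 + be*x*y + al*y^2) ^ ((n - 1) div 2 - r)
                          * (a*x^2 + b*x*y + a*y^2) ^ r))"
  show "c = coeff (qPhi a b al be n)"
  proof
    fix r
    show "c r = coeff (qPhi a b al be n) r"
    proof (cases "r \<le> (n - 1) div 2")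
      case False
      then show ?thesis using H deg_qPhi[of a b al be n] by (auto simp: coeff_eq_0)
    next
      case True
      have "c r - coeff (qPhi a b al be n) r = 0"
      proof (rule uniq[OF D _ True])
        fix x y :: complex
        assume "x + y \<noteq> 0" "x - y \<noteq> 0"
        then have nz: "(x - y) * (x + y) ^ delta (n - 1) \<noteq> 0" by simp
        show "(\<Sum>r\<le>(n - 1) div 2. (c r - coeff (qPhi a b al be n) r) * (al*x^2+be*x*y+al*y^2)^((n - 1) div 2-r) * (a*x^2+b*x*y+a*y^2)^r) = 0"
          using conjunct2[OF H, rule_format, OF nz] Phi_ident[OF nz, of be a al b]
          by (simp add: left_diff_distrib sum_subtractf)
      qed
      then show ?thesis by simp
    qed
  qed
qed

lemma poly_le_sum:
  fixes q :: "complex poly"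
  assumes "degree q \<le> k"
  shows "(\<Sum>r\<le>k. coeff q r * z^r) = poly q z"
proof -
  have "(\<Sum>r\<le>k. coeff q r * z^r) = (\<Sum>r\<le>degree q. coeff q r * z^r)"
    by (rule sum.mono_neutral_right) (use assms in \<open>auto simp: coeff_eq_0\<close>)
  then show ?thesis unfolding poly_altdef[of q z] .
qed

lemma pl1: fixes a b al be :: complex shows "poly [:2*a-b, be-2*al:] (-1) = 2*(a+al) - (b+be)"
  by (simp add: algebra_simps)

lemma pl2: fixes a al :: complex shows "poly [:a, -al:] (-1) = a+al"
  by simp

lemma poly_qPsi: "poly (qPsi a b al be n) (-1) = Psi (a+al) (b+be) n"
proof (induction a b al be n rule: qPsi.induct)
  case (3 a b al be m)
  show ?case
    unfolding qPsi.simps(3) poly_diff poly_mult poly_power pl1 pl2 3 by simp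
qed simp_all

lemma poly_qPhi: "poly (qPhi a b al be n) (-1) = Phi (a+al) (b+be) n"
proof (induction a b al be n rule: qPhi.induct)
  case (3 a b al be m)
  show ?case
    unfolding qPhi.simps(3) poly_diff poly_mult poly_power pl1 pl2 3 by simp
qed simp_all

theorem theorem10p4:
  fixes a b al be :: complex and n :: nat
  assumes "be*a - al*b \<noteq> 0" and "n \<ge> 1"
  shows "(\<Sum>r\<le>n div 2. PsiC a b al be n r * (-1) ^ r) = Psi (a + al) (b + be) n \<and>
         (\<Sum>r\<le>(n - 1) div 2. PhiC a b al be n r * (-1) ^ r) = Phi (a + al) (b + be) n"
  unfolding PsiC_eq[OF assms(1)] PhiC_eq[OF assms(1)]
  using poly_le_sum[OF deg_qPsi, of a b al be n "-1"] poly_le_sum[OF deg_qPhi, of a b al be n "-1"]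
    poly_qPsi poly_qPhi by simp

end
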